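(* Consider the setting described in the context and assume $D>2$. For $t\ge 1$ define $\mathcal{I}_0(t)=\bigcup_{m=0}^{t-1}\mathcal{F}_0(m)$, $\mathcal{I}_1(t)=\Big(\bigcup_{m=0}^{t-1}\mathcal{F}_{D-1}(m)\Big)\setminus \mathcal{I}_0(t)$, $\mathcal{I}_2(t)=V\setminus(\mathcal{I}_0(t)\cup\mathcal{I}_1(t))$. Then for every $t\ge1$: $\hat d_i(t)=m$ for all $i\in\mathcal{F}_0(m)$ with $0\le m<t$; $\hat d_i(t)=m$ for all $i\in\mathcal{F}_{D-1}(m)\cap\mathcal{I}_2(t)$; and $\hat d_i(t)\in\{t,t+1\}$ for all $i\in\mathcal{I}_1(t)$.
   Context: $G=(V,E)$ is a finite connected undirected graph with node set $V=\{0,\dots,N-1\}$; $\mathcal{N}(i)$ denotes the set of neighbours of $i$. Every edge has length $1$, $d_{ij}$ is the hop distance between $i$ and $j$, and $\mathcal{F}_k(m)=\{i\in V : d_{ik}=m\}$. The source set is $S(t)=\{D-1\}$ for $t\le 0$ and $S(t)=\{0\}$ for $t\ge 1$. The integer $D$ satisfies $\max_{i\in V}d_{i0}=D-1$, and nodes are labelled so that $0,1,\dots,D-1$ is a path in which node $i$ is a neighbour of $i+1$ with $d_{0,i}=i$ for $0\le i\le D-1$. Distance estimates evolve, for $t\ge1$, by $\hat d_i(t)=0$ if $i\in S(t)$ and $\hat d_i(t)=\min_{j\in\mathcal{N}(i)}\{\hat d_j(t-1)+1\}$ otherwise, with initial values $\hat d_i(0)=m$ for all $i\in\mathcal{F}_{D-1}(m)$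 (the steady state for source $D-1$). *)

theory Defs
  imports Main
begin

definition is_walk :: "(nat \<Rightarrow> nat \<Rightarrow> bool) \<Rightarrow> nat \<Rightarrow> nat list \<Rightarrow> bool" where
  "is_walk adj N xs \<longleftrightarrow> xs \<noteq> [] \<and> set xs \<subseteq> {..<N} \<and>
     (\<forall>k. Suc k < length xs \<longrightarrow> adj (xs ! k) (xs ! Suc k))"

definition hop_dist :: "(nat \<Rightarrow> nat \<Rightarrow> bool) \<Rightarrow> nat \<Rightarrow> nat \<Rightarrow> nat \<Rightarrow> nat" where
  "hop_dist adj N i j = (LEAST n. \<exists>xs. is_walk adj N xs \<and> hd xs = i \<and> last xs = j \<and> length xs = Suc n)"

definition undirected_graph :: "(nat \<Rightarrow> nat \<Rightarrow> bool) \<Rightarrow> nat \<Rightarrow> bool" where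
  "undirected_graph adj N \<longleftrightarrow> (\<forall>i j. adj i j \<longrightarrow> i < N \<and> j < N \<and> adj j i \<and> i \<noteq> j)"

definition connected_graph :: "(nat \<Rightarrow> nat \<Rightarrow> bool) \<Rightarrow> nat \<Rightarrow> bool" where
  "connected_graph adj N \<longleftrightarrow> 0 < N \<and> (\<forall>i<N. \<forall>j<N. \<exists>xs. is_walk adj N xs \<and> hd xs = i \<and> last xs = j)"

text \<open>Distance estimates: at time 0 the steady state for source D-1; for t >= 1 the source is node 0.\<close>
primrec dhat :: "(nat \<Rightarrow> nat \<Rightarrow> bool) \<Rightarrow> nat \<Rightarrow> nat \<Rightarrow> nat \<Rightarrow> nat \<Rightarrow> nat" where
  "dhat adj N D 0 i = hop_dist adj N i (D - 1)"
| "dhat adj N D (Suc t) i = (if i = 0 then 0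
      else Min ((\<lambda>j. dhat adj N D t j + 1) ` {j. j < N \<and> adj i j}))"

end

theory Submission
  imports Defs
begin

definition Pw where
  "Pw adj N n i j = (\<exists>xs. is_walk adj N xs \<and> hd xs = i \<and> last xs = j \<and> length xs = Suc n)"

lemma hd_P:
  assumes conn: "connected_graph adj N" and "i < N" "j < N"
  shows "Pw adj N (hop_dist adj N i j) i j"
proof -
  obtain xs where xs: "is_walk adj N xs" "hd xs = i" "last xs = j"
    using conn assms unfolding connected_graph_def by blast
  then have "Pw adj N (length xs - 1) i j" unfolding Pw_def
    by (intro exI[of _ xs]) (auto simp: is_walk_def)
  then show ?thesis unfolding hop_dist_def Pw_def[symmetric] by (rule LeastI)
qed

lemma hd_le: "Pw adj N n i j \<Longrightarrow> hop_dist adj N i j \<le> n"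
  unfolding hop_dist_def Pw_def[symmetric] by (rule Least_le)

lemma hd_refl: "i < N \<Longrightarrow> hop_dist adj N i i = 0"
proof -
  assume "i < N"
  then have "Pw adj N 0 i i" unfolding Pw_def
    by (intro exI[of _ "[i]"]) (auto simp: is_walk_def)
  then show ?thesis using hd_le by fastforce
qed

lemma hd_zero:
  assumes conn: "connected_graph adj N" and "i < N" "j < N" "hop_dist adj N i j = 0"
  shows "i = j"
proof -
  from hd_P[OF assms(1-3)] assms(4) obtain xs where "is_walk adj N xs" "hd xs = i" "last xs = j" "length xs = 1"
    unfolding Pw_def by auto
  then show ?thesis by (cases xs) auto
qed

lemma hd_tri:
  assumes conn: "connected_graph adj N" and graph: "undirected_graph adj N"
    and a: "adj i k" and j: "j < N"
  shows "hop_dist adj N i j \<le> hop_dist adj N k j + 1"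
proof -
  have k: "k < N" "i < N" using a graph unfolding undirected_graph_def by auto
  from hd_P[OF conn k(1) j] obtain xs where xs: "is_walk adj N xs" "hd xs = k" "last xs = j"
    "length xs = Suc (hop_dist adj N k j)"
    unfolding Pw_def by auto
  have "Pw adj N (Suc (hop_dist adj N k j)) i j" unfolding Pw_def
  proof (intro exI[of _ "i # xs"] conjI)
    show "is_walk adj N (i # xs)" using xs k a unfolding is_walk_def
      by (auto simp: nth_Cons hd_conv_nth split: nat.splits)
  qed (use xs in auto)
  then show ?thesis using hd_le by fastforce
qed

lemma hd_step:
  assumes conn: "connected_graph adj N" and graph: "undirected_graph adj N"
    and "i < N" "j < N" "hop_dist adj N i j = Suc n"
  shows "\<exists>k. adj i k \<and> hop_dist adj N k j = n"
proof -
  from hd_P[OF conn assms(3,4)] assms(5) obtain xs where xs: "is_walk adj N xs" "hd xs = i" "last xs = j"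
    "length xs = Suc (Suc n)" unfolding Pw_def by auto
  then obtain a b ys where ys: "xs = a # b # ys" by (metis Suc_length_conv)
  have ab: "adj i b" using xs ys unfolding is_walk_def by force
  have "Pw adj N n b j" unfolding Pw_def
    by (intro exI[of _ "b # ys"]) (use xs ys in \<open>auto simp: is_walk_def\<close>)
  then have "hop_dist adj N b j \<le> n" by (rule hd_le)
  moreover have "hop_dist adj N i j \<le> hop_dist adj N b j + 1"
    by (rule hd_tri[OF conn graph ab assms(4)])
  ultimately show ?thesis using ab assms(5) by auto
qed


definition ff :: "nat \<Rightarrow> nat \<Rightarrow> nat" where
  "ff t m = (if t \<le> m then m else t + (t - m) mod 2)"

context
  fixes adj :: "nat \<Rightarrow> nat \<Rightarrow> bool" and N D :: nat
  assumes graph: "undirected_graph adj N"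
    and conn: "connected_graph adj N"
    and path_adj: "\<forall>i. Suc i < D \<longrightarrow> adj i (Suc i)"
    and D_gt: "D > 2"
begin

lemma adjN: "adj i j \<Longrightarrow> i < N \<and> j < N \<and> adj j i \<and> i \<noteq> j"
  using graph unfolding undirected_graph_def by blast

lemma DN: "D - 1 < N" "0 < N"
proof -
  have "adj (D - 2) (Suc (D - 2))" using path_adj D_gt by auto
  moreover have "Suc (D - 2) = D - 1" using D_gt by auto
  ultimately show "D - 1 < N" using adjN by metis
  then show "0 < N" by simp
qed

lemma nbr_fin: "finite {j. j < N \<and> adj i j}" by auto

lemma nbr_ne: assumes "i < N" "i \<noteq> 0" shows "{j. j < N \<and> adj i j} \<noteq> {}"
proof -
  have "hop_dist adj N i 0 \<noteq> 0" using hd_zero[OF conn assms(1) DN(2)] assms by auto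
  then obtain n where "hop_dist adj N i 0 = Suc n" by (cases "hop_dist adj N i 0") auto
  from hd_step[OF conn graph assms(1) DN(2) this] show ?thesis using adjN by auto
qed

lemma dhat_Suc: "i < N \<Longrightarrow> i \<noteq> 0 \<Longrightarrow> dhat adj N D (Suc t) i = Min ((\<lambda>j. dhat adj N D t j + 1) ` {j. j < N \<and> adj i j})"
  by simp

lemma dhat_le_nbr: "i \<noteq> 0 \<Longrightarrow> adj i j \<Longrightarrow> dhat adj N D (Suc t) i \<le> dhat adj N D t j + 1"
  using adjN[of i j] by (auto intro!: Min_le)

lemma dhat_ge_nbr:
  assumes "i < N" "i \<noteq> 0" "\<And>j. adj i j \<Longrightarrow> x \<le> dhat adj N D t j + 1"
  shows "x \<le> dhat adj N D (Suc t) i"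
  using assms nbr_ne[OF assms(1,2)] by (auto simp: Min_ge_iff)

lemma lower:
  "\<forall>i<N. (if hop_dist adj N i 0 < t then hop_dist adj N i 0 else max t (hop_dist adj N i (D - 1)))
     \<le> dhat adj N D t i"
proof (induction t)
  case 0 then show ?case by simp
next
  case (Suc t)
  show ?case
  proof (intro allI impI)
    fix i assume i: "i < N"
    show "(if hop_dist adj N i 0 < Suc t then hop_dist adj N i 0 else max (Suc t) (hop_dist adj N i (D - 1)))
     \<le> dhat adj N D (Suc t) i"
    proof (cases "i = 0")
      case True then show ?thesis using hd_refl[of 0 N adj] DN by simp
    next
      case False
      show ?thesis
      proof (rule dhat_ge_nbr[OF i False])
        fix j assume a: "adj i j"
        have j: "j < N" using adjN a by auto
        have t0: "hop_dist adj N i 0 \<le> hop_dist adj N j 0 + 1"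
          by (rule hd_tri[OF conn graph a DN(2)])
        have t1: "hop_dist adj N i (D-1) \<le> hop_dist adj N j (D-1) + 1"
          by (rule hd_tri[OF conn graph a DN(1)])
        have IH: "(if hop_dist adj N j 0 < t then hop_dist adj N j 0 else max t (hop_dist adj N j (D - 1)))
          \<le> dhat adj N D t j" using Suc j by blast
        show "(if hop_dist adj N i 0 < Suc t then hop_dist adj N i 0 else max (Suc t) (hop_dist adj N i (D - 1)))
          \<le> dhat adj N D t j + 1"
          using t0 t1 IH by (auto split: if_splits)
      qed
    qed
  qed
qed

lemma upper1:
  "\<forall>i<N. hop_dist adj N i 0 < t \<longrightarrow> dhat adj N D t i \<le> hop_dist adj N i 0"
proof (induction t)
  case 0 then show ?case by simp
next
  case (Suc t)
  show ?case
  proof (intro allI impI)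
    fix i assume i: "i < N" and lt: "hop_dist adj N i 0 < Suc t"
    show "dhat adj N D (Suc t) i \<le> hop_dist adj N i 0"
    proof (cases "i = 0")
      case True then show ?thesis by simp
    next
      case False
      have "hop_dist adj N i 0 \<noteq> 0" using hd_zero[OF conn i DN(2)] False by auto
      then obtain n where n: "hop_dist adj N i 0 = Suc n" by (cases "hop_dist adj N i 0") auto
      from hd_step[OF conn graph i DN(2) n] obtain j where j: "adj i j" "hop_dist adj N j 0 = n" by auto
      have "dhat adj N D t j \<le> n" using Suc j lt n adjN by auto
      then show ?thesis using dhat_le_nbr[OF False j(1), of t] n by simp
    qed
  qed
qed


lemma ff1: "ff t 1 + 1 \<le> ff (Suc t) 0"
proof (cases "t \<le> 1")
  case True then show ?thesis unfolding ff_def by (cases t) auto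
next
  case False
  then obtain k where "t = Suc (Suc k)" by (metis Suc_le_eq less_imp_Suc_add not_le one_add_one plus_1_eq_Suc)
  then show ?thesis unfolding ff_def by (simp add: mod_Suc)
qed

lemma upper2:
  "\<forall>i<N. dhat adj N D t i \<le> ff t (hop_dist adj N i (D - 1))"
proof (induction t)
  case 0 then show ?case by (simp add: ff_def)
next
  case (Suc t)
  show ?case
  proof (intro allI impI)
    fix i assume i: "i < N"
    show "dhat adj N D (Suc t) i \<le> ff (Suc t) (hop_dist adj N i (D - 1))"
    proof (cases "i = 0")
      case True then show ?thesis by simp
    next
      case False
      show ?thesis
      proof (cases "hop_dist adj N i (D - 1)")
        case 0
        then have iD: "i = D - 1" using hd_zero[OF conn i DN(1)] by auto
        have p: "adj (D - 2) (Suc (D - 2))" using path_adj D_gt by auto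
        have "Suc (D - 2) = D - 1" using D_gt by auto
        with p have a: "adj i (D - 2)" using adjN iD by metis
        have "D - 2 \<noteq> D - 1" using D_gt by auto
        then have "hop_dist adj N (D - 2) (D - 1) \<noteq> 0" using hd_zero[OF conn _ DN(1)] adjN[OF a] by auto
        moreover have "hop_dist adj N (D - 2) (D - 1) \<le> 1"
          using hd_tri[OF conn graph adjN[OF a, THEN conjunct2, THEN conjunct2, THEN conjunct1] DN(1)]
            0 iD by simp
        ultimately have d1: "hop_dist adj N (D - 2) (D - 1) = 1" by simp
        have "D - 2 < N" using adjN[OF a] by simp
        then have "dhat adj N D t (D - 2) \<le> ff t (hop_dist adj N (D - 2) (D - 1))" using Suc.IH by blast
        then have "dhat adj N D t (D - 2) \<le> ff t 1" using d1 by simp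
        then have "dhat adj N D (Suc t) i \<le> ff t 1 + 1" using dhat_le_nbr[OF False a, of t] by simp
        also have "\<dots> \<le> ff (Suc t) 0" by (rule ff1)
        finally show ?thesis using 0 by simp
      next
        case (Suc n)
        from hd_step[OF conn graph i DN(1) Suc] obtain j where j: "adj i j" "hop_dist adj N j (D - 1) = n" by auto
        have "dhat adj N D t j \<le> ff t n" using Suc.IH j adjN by auto
        then have "dhat adj N D (Suc t) i \<le> ff t n + 1" using dhat_le_nbr[OF False j(1), of t] by simp
        also have "\<dots> = ff (Suc t) (Suc n)" unfolding ff_def by (auto simp: Suc_diff_le)
        finally show ?thesis using Suc by simp
      qed
    qed
  qed
qed

end

theorem lemma2:
  fixes adj :: "nat \<Rightarrow> nat \<Rightarrow> bool" and N D :: nat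
  assumes graph: "undirected_graph adj N"
    and conn: "connected_graph adj N"
    and ecc: "Max ((\<lambda>i. hop_dist adj N i 0) ` {..<N}) = D - 1"
    and path_adj: "\<forall>i. Suc i < D \<longrightarrow> adj i (Suc i)"
    and path_dist: "\<forall>i<D. hop_dist adj N 0 i = i"
    and D_gt: "D > 2"
  shows "\<forall>t\<ge>1.
     let I0 = {i. i < N \<and> hop_dist adj N i 0 < t};
         I1 = {i. i < N \<and> hop_dist adj N i (D - 1) < t} - I0;
         I2 = {..<N} - (I0 \<union> I1)
     in (\<forall>m<t. \<forall>i<N. hop_dist adj N i 0 = m \<longrightarrow> dhat adj N D t i = m)
      \<and> (\<forall>m. \<forall>i\<in>I2. hop_dist adj N i (D - 1) = m \<longrightarrow> dhat adj N D t i = m)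
      \<and> (\<forall>i\<in>I1. dhat adj N D t i \<in> {t, t + 1})"
proof (intro allI impI)
  fix t :: nat assume t: "t \<ge> 1"
  note L = lower[OF graph conn path_adj D_gt, of t]
  note U1 = upper1[OF graph conn path_adj D_gt, of t]
  note U2 = upper2[OF graph conn path_adj D_gt, of t]
  have A: "\<forall>m<t. \<forall>i<N. hop_dist adj N i 0 = m \<longrightarrow> dhat adj N D t i = m"
  proof (intro allI impI)
    fix m i assume "m < t" "i < N" "hop_dist adj N i 0 = m"
    then show "dhat adj N D t i = m" using L U1 by (metis le_antisym)
  qed
  have B: "\<forall>i<N. \<not> hop_dist adj N i 0 < t \<longrightarrow> \<not> hop_dist adj N i (D - 1) < t \<longrightarrow>
      dhat adj N D t i = hop_dist adj N i (D - 1)"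
  proof (intro allI impI)
    fix i assume i: "i < N" "\<not> hop_dist adj N i 0 < t" "\<not> hop_dist adj N i (D - 1) < t"
    have "dhat adj N D t i \<ge> hop_dist adj N i (D - 1)" using L i by auto
    moreover have "ff t (hop_dist adj N i (D - 1)) = hop_dist adj N i (D - 1)" using i(3) by (simp add: ff_def)
    then have "dhat adj N D t i \<le> hop_dist adj N i (D - 1)" using U2 i(1) by metis
    ultimately show "dhat adj N D t i = hop_dist adj N i (D - 1)" by simp
  qed
  have C: "\<forall>i<N. \<not> hop_dist adj N i 0 < t \<longrightarrow> hop_dist adj N i (D - 1) < t \<longrightarrow>
      dhat adj N D t i \<in> {t, t + 1}"
  proof (intro allI impI)
    fix i assume i: "i < N" "\<not> hop_dist adj N i 0 < t" "hop_dist adj N i (D - 1) < t"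
    have "dhat adj N D t i \<ge> t" using L i by auto
    moreover have "(t - hop_dist adj N i (D - 1)) mod 2 < 2" by simp
    then have "dhat adj N D t i \<le> t + 1" using U2 i unfolding ff_def by fastforce
    ultimately show "dhat adj N D t i \<in> {t, t + 1}" by auto
  qed
  show "let I0 = {i. i < N \<and> hop_dist adj N i 0 < t};
         I1 = {i. i < N \<and> hop_dist adj N i (D - 1) < t} - I0;
         I2 = {..<N} - (I0 \<union> I1)
     in (\<forall>m<t. \<forall>i<N. hop_dist adj N i 0 = m \<longrightarrow> dhat adj N D t i = m)
      \<and> (\<forall>m. \<forall>i\<in>I2. hop_dist adj N i (D - 1) = m \<longrightarrow> dhat adj N D t i = m)
      \<and> (\<forall>i\<in>I1. dhat adj N D t i \<in> {t, t + 1})"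
    unfolding Let_def using A B C by auto
qed

end
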